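(* Let $n\ge 2$ and let $S=[A_0,\dots,A_n]$ be an $n$-pre-kite. If the circumcenter and the incenter of $S$ coincide, then $S$ is a regular $n$-simplex.
   Context: An $n$-simplex is the convex hull of $n+1$ affinely independent points in a Euclidean space. It is an $n$-pre-kite if one of its facets (the $(n-1)$-simplex obtained by deleting one vertex) is a regular $(n-1)$-simplex, i.e. has all edges of equal length. The circumcenter of $S$ is the center of the $(n-1)$-sphere in the affine hull of $S$ passing through all vertices; the incenter is the center of the $(n-1)$-sphere in the affine hull of $S$ touching every facet at a point of that facet's convex hull. $S$ is regular if all its edges have the same length. *)

theory Defs
  imports "HOL-Analysis.Analysis"
begin

definition is_simplex :: "nat \<Rightarrow> (nat \<Rightarrow> 'a::euclidean_space) \<Rightarrow> bool" where
  "is_simplex n A \<longleftrightarrow> inj_on A {0..n} \<and> \<not> affine_dependent (A ` {0..n})"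

definition facet :: "nat \<Rightarrow> (nat \<Rightarrow> 'a::euclidean_space) \<Rightarrow> nat \<Rightarrow> 'a set" where
  "facet n A j = A ` ({0..n} - {j})"

definition equal_edges :: "nat set \<Rightarrow> (nat \<Rightarrow> 'a::euclidean_space) \<Rightarrow> bool" where
  "equal_edges I A \<longleftrightarrow>
     (\<forall>i\<in>I. \<forall>k\<in>I. \<forall>i'\<in>I. \<forall>k'\<in>I. i \<noteq> k \<longrightarrow> i' \<noteq> k' \<longrightarrow>
        dist (A i) (A k) = dist (A i') (A k'))"

definition regular_simplex :: "nat \<Rightarrow> (nat \<Rightarrow> 'a::euclidean_space) \<Rightarrow> bool" where
  "regular_simplex n A \<longleftrightarrow> is_simplex n A \<and> equal_edges {0..n} A"

definition pre_kite :: "nat \<Rightarrow> (nat \<Rightarrow> 'a::euclidean_space) \<Rightarrow> bool" where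
  "pre_kite n A \<longleftrightarrow> is_simplex n A \<and> (\<exists>j\<in>{0..n}. equal_edges ({0..n} - {j}) A)"

definition is_circumcenter :: "nat \<Rightarrow> (nat \<Rightarrow> 'a::euclidean_space) \<Rightarrow> 'a \<Rightarrow> bool" where
  "is_circumcenter n A C \<longleftrightarrow> C \<in> affine hull (A ` {0..n}) \<and>
     (\<exists>R. \<forall>i\<in>{0..n}. dist C (A i) = R)"

text \<open>Incenter: centre of a sphere (radius r > 0) in the affine hull touching every
  facet at a point of the facet's convex hull, i.e. the facet's affine hull lies outside
  the open ball and the sphere meets the facet's convex hull.\<close>
definition is_incenter :: "nat \<Rightarrow> (nat \<Rightarrow> 'a::euclidean_space) \<Rightarrow> 'a \<Rightarrow> bool" where
  "is_incenter n A I \<longleftrightarrow> I \<in> affine hull (A ` {0..n}) \<and>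
     (\<exists>r>0. \<forall>j\<in>{0..n}.
        (\<exists>p\<in>convex hull (facet n A j). dist I p = r) \<and>
        (\<forall>q\<in>affine hull (facet n A j). r \<le> dist I q))"

end

theory Submission
  imports Defs
begin


lemma foot_inner:
  fixes X p y :: "'a::euclidean_space"
  assumes S: "affine S" and pS: "p \<in> S" and yS: "y \<in> S"
    and mn: "\<forall>q\<in>S. dist X p \<le> dist X q"
  shows "inner (y - X) (p - X) = (dist X p)^2"
proof -
  define u where "u = p - X"
  define d where "d = y - p"
  have key: "0 \<le> 2 * t * inner u d + t^2 * inner d d" for t :: real
  proof -
    have "(1 - t) *\<^sub>R p + t *\<^sub>R y \<in> S"
      using S pS yS by (simp add: affine_alt)
    then have "dist X p \<le> dist X ((1 - t) *\<^sub>R p + t *\<^sub>R y)" using mn by blast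
    moreover have "(1 - t) *\<^sub>R p + t *\<^sub>R y - X = u + t *\<^sub>R d"
      by (simp add: u_def d_def algebra_simps)
    ultimately have "norm u \<le> norm (u + t *\<^sub>R d)"
      by (metis dist_commute dist_norm u_def)
    then have "norm u ^2 \<le> norm (u + t *\<^sub>R d) ^2"
      by (simp add: power_mono)
    moreover have "norm (u + t *\<^sub>R d) ^2 = norm u ^ 2 + (2 * t * inner u d + t^2 * inner d d)"
      unfolding power2_norm_eq_inner
      by (simp add: inner_add_left inner_add_right inner_commute power2_eq_square algebra_simps)
    ultimately show ?thesis by linarith
  qed
  have ud: "inner u d = 0"
  proof (rule ccontr)
    assume h: "inner u d \<noteq> 0"
    then have "d \<noteq> 0" by auto
    then have dd: "inner d d > 0" by simp
    define t where "t = - inner u d / inner d d"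
    have "0 \<le> 2 * t * inner u d + t^2 * inner d d" by (rule key)
    also have "\<dots> = - ((inner u d)^2 / inner d d)"
      using dd by (simp add: t_def power2_eq_square field_simps)
    also have "\<dots> < 0" using h dd by (simp add: divide_pos_pos)
    finally show False by simp
  qed
  have "y - X = d + u" by (simp add: u_def d_def)
  then have "inner (y - X) (p - X) = inner d u + inner u u"
    by (metis inner_add_left u_def)
  also have "\<dots> = (dist X p)^2"
    using ud by (metis add_0 dist_commute dist_norm inner_commute power2_norm_eq_inner u_def)
  finally show ?thesis .
qed

lemma hull_coeffs:
  fixes A :: "nat \<Rightarrow> 'a::euclidean_space"
  assumes "finite K" "inj_on A K" "p \<in> convex hull (A ` K)"
  shows "\<exists>l. (\<forall>k\<in>K. 0 \<le> l k) \<and> sum l K = 1 \<and> p = (\<Sum>k\<in>K. l k *\<^sub>R A k)"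
proof -
  from assms obtain u where u: "\<forall>x\<in>A ` K. 0 \<le> u x" "sum u (A ` K) = 1"
     "(\<Sum>x\<in>A ` K. u x *\<^sub>R x) = p"
    using convex_hull_finite[of "A ` K"] by auto
  show ?thesis
    apply (rule exI[of _ "u \<circ> A"])
    using u assms(2) by (simp add: sum.reindex)
qed



lemma facet_alg:
  fixes M :: "nat set" and mu D nn :: real and nu e :: "nat \<Rightarrow> real"
  assumes fin: "finite M" and D: "D > 0" and nn: "nn = real (card M) + 1"
    and mu: "mu \<ge> 0" and s1: "mu + sum nu M = 1"
    and eqm: "\<forall>m\<in>M. mu * e m + nu m * D = D / nn"
    and eqj: "mu * D + (\<Sum>m\<in>M. nu m * e m) = D / nn"
  shows "D - sum e M > 0 \<and> (\<Sum>m\<in>M. (e m)^2) = 2*D* sum e M - (sum e M)^2"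
proof -
  define E where "E = sum e M"
  define Q where "Q = (\<Sum>m\<in>M. (e m)^2)"
  have nnpos: "nn > 0" using nn by simp
  have "(\<Sum>m\<in>M. mu * e m + nu m * D) = (\<Sum>m\<in>M. D / nn)"
    using eqm by (intro sum.cong) auto
  then have "mu * E + D * sum nu M = real (card M) * (D / nn)"
    by (simp add: sum.distrib sum_distrib_left[symmetric] sum_distrib_right[symmetric] E_def mult.commute)
  moreover have snu: "sum nu M = 1 - mu" using s1 by linarith
  moreover have cM: "real (card M) = nn - 1" using nn by simp
  ultimately have "mu * E + D * (1 - mu) = (nn - 1) * (D / nn)"
    by simp
  then have e1: "mu * (D - E) = D / nn"
    using nnpos by (simp add: field_simps)
  have Dn: "D / nn > 0" using D nnpos by simp
  have mupos: "mu > 0" using e1 Dn mu by (cases "mu = 0") auto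
  have DE: "D - E > 0"
    using e1 Dn mupos by (metis zero_less_mult_pos)
  have "(\<Sum>m\<in>M. e m * (mu * e m + nu m * D)) = (\<Sum>m\<in>M. e m * (D / nn))"
    using eqm by (intro sum.cong) auto
  then have "mu * Q + D * (\<Sum>m\<in>M. nu m * e m) = (D / nn) * E"
    by (simp add: distrib_left sum.distrib sum_distrib_left sum_distrib_right Q_def E_def
        power2_eq_square algebra_simps sum_divide_distrib)
  moreover have "(\<Sum>m\<in>M. nu m * e m) = D / nn - mu * D" using eqj by linarith
  ultimately have "mu * Q + D * (D / nn - mu * D) = (D / nn) * E"
    by simp
  then have "mu * Q + D * (mu * (D - E) - mu * D) = (mu * (D - E)) * E"
    using e1 by simp
  then have "mu * (Q - (2 * D * E - E^2)) = 0"
    by (simp add: algebra_simps power2_eq_square)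
  then have "Q = 2 * D * E - E^2" using mupos by simp
  then show ?thesis using DE unfolding E_def Q_def by simp
qed

lemma sq_strict:
  fixes J :: "nat set" and e :: "nat \<Rightarrow> real"
  assumes fin: "finite J" and c: "card J \<ge> 2" and pos: "\<forall>i\<in>J. e i > 0"
  shows "(\<Sum>m\<in>J. (e m)^2) < (sum e J)^2"
proof -
  have ne: "J \<noteq> {}" using c by auto
  have "\<forall>i\<in>J. e i < sum e J"
  proof
    fix i assume i: "i \<in> J"
    have "card (J - {i}) \<ge> 1" using c i fin by (simp add: card_Diff_singleton)
    then have "J - {i} \<noteq> {}" by (cases "J - {i} = {}") auto
    then have "sum e (J - {i}) > 0" using pos fin by (intro sum_pos) auto
    moreover have "sum e J = e i + sum e (J - {i})" using i fin by (simp add: sum.remove)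
    ultimately show "e i < sum e J" by simp
  qed
  then have "(\<Sum>m\<in>J. (e m)^2) < (\<Sum>m\<in>J. e m * sum e J)"
    using fin ne pos by (intro sum_strict_mono) (auto simp: power2_eq_square)
  also have "\<dots> = (sum e J)^2" by (simp add: sum_distrib_right[symmetric] power2_eq_square)
  finally show ?thesis .
qed

lemma final_alg:
  fixes J :: "nat set" and e :: "nat \<Rightarrow> real" and D :: real
  assumes fin: "finite J" and c: "card J \<ge> 2" and D: "D > 0"
    and h1: "\<forall>i\<in>J. D - (sum e J - e i) > 0"
    and h2: "\<forall>i\<in>J. (\<Sum>m\<in>J. (e m)^2) - (e i)^2 = 2*D*(sum e J - e i) - (sum e J - e i)^2"
  shows "\<forall>i\<in>J. e i = 0"
proof -
  define E where "E = sum e J"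
  define Q where "Q = (\<Sum>m\<in>J. (e m)^2)"
  define K where "K = 2*D*E - E^2 - Q"
  have lin: "e i * (2*D - 2*E) = K" if "i \<in> J" for i
    using h2 that unfolding K_def E_def Q_def by (simp add: algebra_simps power2_eq_square)
  show ?thesis
  proof (cases "E = D")
    case True
    have pos: "\<forall>i\<in>J. e i > 0" using h1 True E_def by auto
    have "K = 0" using lin True c by (metis card.empty mult_zero_right not_numeral_le_zero
          equals0I diff_self mult_2)
    then have "Q = E^2" using True by (simp add: K_def power2_eq_square)
    with sq_strict[OF fin c pos] show ?thesis by (simp add: Q_def E_def)
  next
    case False
    define c0 where "c0 = K / (2*D - 2*E)"
    have ec: "\<forall>i\<in>J. e i = c0" using lin False unfolding c0_def
      by (auto simp: field_simps)
    define n where "n = real (card J)"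
    have n2: "n \<ge> 2" using c n_def by simp
    have E: "E = n * c0" using ec unfolding E_def n_def by simp
    have Q: "Q = n * c0^2" using ec unfolding Q_def n_def by simp
    obtain i where i: "i \<in> J" using c by fastforce
    have "Q - (e i)^2 = 2*D*(E - e i) - (E - e i)^2"
      using h2 i unfolding E_def Q_def by simp
    then have "n * c0^2 - c0^2 = 2*D*(n*c0 - c0) - (n*c0 - c0)^2"
      using i ec E Q by simp
    then have "(n - 1) * (c0 * (n * c0 - 2 * D)) = 0"
      by (simp add: algebra_simps power2_eq_square)
    then have "c0 = 0 \<or> n * c0 = 2 * D" using n2 by auto
    moreover have "D - (E - e i) > 0" using h1 i unfolding E_def by simp
    then have "D - (n*c0 - c0) > 0" using i ec E by simp
    moreover have "\<not> (n * c0 = 2 * D \<and> D - (n*c0 - c0) > 0)"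
    proof
      assume a: "n * c0 = 2 * D \<and> D - (n*c0 - c0) > 0"
      then have "c0 = 2 * D / n" using n2 by (simp add: field_simps)
      then have "D - (2*D - 2*D/n) > 0" using a by simp
      then have "n * (D - (2*D - 2*D/n)) > 0" using n2 by simp
      then have "D * (2 - n) > 0" using n2 by (simp add: algebra_simps)
      then show False using D n2 by (simp add: mult_pos_neg zero_less_mult_iff)
    qed
    ultimately have "c0 = 0" by blast
    then show ?thesis using ec by simp
  qed
qed


theorem theorem6p3:
  fixes A :: "nat \<Rightarrow> 'a::euclidean_space" and n :: nat and X :: 'a
  assumes "n \<ge> 2"
    and "pre_kite n A"
    and "is_circumcenter n A X"
    and "is_incenter n A X"
  shows "regular_simplex n A"
proof -
  have n2: "n \<ge> 2" by fact
  from assms(2) have simp: "is_simplex n A" and "\<exists>j\<in>{0..n}. equal_edges ({0..n} - {j}) A"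
    unfolding pre_kite_def by auto
  then obtain j0 where j0: "j0 \<in> {0..n}" and ee: "equal_edges ({0..n} - {j0}) A" by blast
  have inj: "inj_on A {0..n}" using simp unfolding is_simplex_def by auto
  from assms(3) obtain R where R: "\<forall>i\<in>{0..n}. dist X (A i) = R"
    unfolding is_circumcenter_def by auto
  from assms(4) obtain r where rpos: "r > 0" and inc: "\<forall>j\<in>{0..n}.
        (\<exists>p\<in>convex hull (facet n A j). dist X p = r) \<and>
        (\<forall>q\<in>affine hull (facet n A j). r \<le> dist X q)"
    unfolding is_incenter_def by auto
  define a where "a k = A k - X" for k
  define G where "G k l = inner (a k) (a l)" for k l
  have GR: "G k k = R^2" if "k \<in> {0..n}" for k
    using R that unfolding G_def a_def
    by (metis dist_commute dist_norm power2_norm_eq_inner)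
  have Gsym: "G k l = G l k" for k l unfolding G_def by (simp add: inner_commute)
  have foot: "\<exists>l. (\<forall>k\<in>{0..n}-{j}. 0 \<le> l k) \<and> sum l ({0..n}-{j}) = 1 \<and>
      (\<forall>m\<in>{0..n}-{j}. (\<Sum>k\<in>{0..n}-{j}. l k * G m k) = r^2)" if j: "j \<in> {0..n}" for j
  proof -
    from inc j obtain p where p: "p \<in> convex hull (facet n A j)" "dist X p = r"
      and mn: "\<forall>q\<in>affine hull (facet n A j). r \<le> dist X q" by blast
    have injK: "inj_on A ({0..n}-{j})" using inj by (rule inj_on_subset) auto
    obtain l where l: "\<forall>k\<in>{0..n}-{j}. 0 \<le> l k" "sum l ({0..n}-{j}) = 1"
      "p = (\<Sum>k\<in>{0..n}-{j}. l k *\<^sub>R A k)"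
      using hull_coeffs[OF _ injK] p(1) unfolding facet_def by auto
    have pX: "p - X = (\<Sum>k\<in>{0..n}-{j}. l k *\<^sub>R a k)"
    proof -
      have "(\<Sum>k\<in>{0..n}-{j}. l k *\<^sub>R a k) = (\<Sum>k\<in>{0..n}-{j}. l k *\<^sub>R A k) - (\<Sum>k\<in>{0..n}-{j}. l k *\<^sub>R X)"
        unfolding a_def by (simp add: scaleR_diff_right sum_subtractf)
      also have "(\<Sum>k\<in>{0..n}-{j}. l k *\<^sub>R X) = X"
        using l(2) by (simp add: scaleR_sum_left[symmetric])
      finally show ?thesis using l(3) by simp
    qed
    have pin: "p \<in> affine hull (facet n A j)"
      using p(1) convex_hull_subset_affine_hull by blast
    show ?thesis
    proof (intro exI conjI ballI)
      show "0 \<le> l k" if "k \<in> {0..n}-{j}" for k using l(1) that by auto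
      show "sum l ({0..n}-{j}) = 1" by fact
      fix m assume m: "m \<in> {0..n}-{j}"
      have "A m \<in> affine hull (facet n A j)"
        using m unfolding facet_def by (intro hull_inc) auto
      then have "inner (A m - X) (p - X) = (dist X p)^2"
        using foot_inner[OF affine_affine_hull pin] mn p(2) by auto
      then have "inner (a m) (p - X) = r^2" using p(2) by (simp add: a_def)
      then show "(\<Sum>k\<in>{0..n}-{j}. l k * G m k) = r^2"
        unfolding pX G_def by (simp add: inner_sum_right)
    qed
  qed
  define J where "J = {0..n} - {j0}"
  have finJ: "finite J" unfolding J_def by simp
  have cardJ: "card J = n" unfolding J_def using j0 by (simp add: card_Diff_singleton)
  obtain k0 l0 where kl: "k0 \<in> J" "l0 \<in> J" "k0 \<noteq> l0"
  proof -
    have "card J \<ge> 2" using cardJ n2 by simp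
    then obtain k0 where "k0 \<in> J" by fastforce
    moreover have "J - {k0} \<noteq> {}"
    proof
      assume "J - {k0} = {}"
      then have "J \<subseteq> {k0}" by auto
      then have "card J \<le> card {k0}" by (intro card_mono) auto
      then show False using \<open>card J \<ge> 2\<close> by simp
    qed
    ultimately show ?thesis using that by blast
  qed
  define d0 where "d0 = dist (A k0) (A l0)"
  have edge: "dist (A k) (A l) = d0" if "k \<in> J" "l \<in> J" "k \<noteq> l" for k l
    using ee that kl unfolding equal_edges_def d0_def J_def by blast
  have d0pos: "d0 > 0"
  proof -
    have "A k0 \<noteq> A l0" using inj kl unfolding J_def by (auto dest: inj_onD)
    then show ?thesis unfolding d0_def by simp
  qed
  define D where "D = d0^2 / 2"
  define c where "c = R^2 - D"
  have Dpos: "D > 0" unfolding D_def using d0pos by simp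
  have distG: "(dist (A k) (A l))^2 = 2 * R^2 - 2 * G k l" if "k \<in> {0..n}" "l \<in> {0..n}" for k l
  proof -
    have "A k - A l = a k - a l" unfolding a_def by simp
    then have "(dist (A k) (A l))^2 = inner (a k - a l) (a k - a l)"
      by (simp add: dist_norm power2_norm_eq_inner)
    also have "\<dots> = G k k + G l l - 2 * G k l"
      unfolding G_def by (simp add: inner_diff_left inner_diff_right inner_commute)
    finally show ?thesis using GR that by simp
  qed
  have Gc: "G k l = c" if "k \<in> J" "l \<in> J" "k \<noteq> l" for k l
    using distG[of k l] edge[OF that] that unfolding J_def c_def D_def by (auto simp: field_simps)
  have splitsum: "(\<Sum>k\<in>S. l k * G m k) = l m * G m m + c * (sum l S - l m)"
    if "finite S" "m \<in> S" "S \<subseteq> J" for S l m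
  proof -
    have "(\<Sum>k\<in>S. l k * G m k) = l m * G m m + (\<Sum>k\<in>S-{m}. l k * G m k)"
      using that by (simp add: sum.remove)
    also have "(\<Sum>k\<in>S-{m}. l k * G m k) = (\<Sum>k\<in>S-{m}. c * l k)"
      using that Gc by (intro sum.cong) auto
    also have "\<dots> = c * (sum l S - l m)"
      using that by (simp add: sum_distrib_left[symmetric] sum_diff1)
    finally show ?thesis .
  qed
  have Jsub: "J \<subseteq> {0..n}" unfolding J_def by auto
  have rr: "r^2 = c + D / real n"
  proof -
    obtain l where l: "sum l J = 1" "\<forall>m\<in>J. (\<Sum>k\<in>J. l k * G m k) = r^2"
      using foot[OF j0] unfolding J_def by auto
    have "\<forall>m\<in>J. l m * D + c = r^2"
    proof
      fix m assume m: "m \<in> J"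
      have "r^2 = l m * G m m + c * (sum l J - l m)"
        using l(2) m splitsum[OF finJ m, of l] by simp
      also have "\<dots> = l m * D + c" using GR m Jsub l(1) unfolding c_def by (auto simp: algebra_simps)
      finally show "l m * D + c = r^2" by simp
    qed
    then have "(\<Sum>m\<in>J. l m * D + c) = (\<Sum>m\<in>J. r^2)" by (intro sum.cong) auto
    then have "D * sum l J + real n * c = real n * r^2"
      using cardJ by (simp add: sum.distrib sum_distrib_left[symmetric] mult.commute)
    then have "D + real n * c = real n * r^2" using l(1) by simp
    then show ?thesis using n2 by (simp add: field_simps)
  qed
  define e where "e m = G j0 m - c" for m
  have facet_i: "D - (sum e J - e i) > 0 \<and>
      (\<Sum>m\<in>J. (e m)^2) - (e i)^2 = 2*D*(sum e J - e i) - (sum e J - e i)^2"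
    if i: "i \<in> J" for i
  proof -
    define K where "K = {0..n} - {i}"
    define M where "M = J - {i}"
    have finM: "finite M" unfolding M_def using finJ by simp
    have j0M: "j0 \<notin> M" unfolding M_def J_def by simp
    have KM: "K = insert j0 M" unfolding K_def M_def J_def using i j0 J_def by auto
    have MJ: "M \<subseteq> J" unfolding M_def by auto
    have cardM: "card M = n - 1" unfolding M_def using i finJ cardJ by (simp add: card_Diff_singleton)
    have i0: "i \<in> {0..n}" using i Jsub by auto
    obtain l where l0: "\<forall>k\<in>K. 0 \<le> l k" and l1: "sum l K = 1"
      and l2: "\<forall>m\<in>K. (\<Sum>k\<in>K. l k * G m k) = r^2"
      using foot[OF i0] unfolding K_def by auto
    have sK: "(\<Sum>k\<in>K. f k) = f j0 + (\<Sum>k\<in>M. f k)" for f :: "nat \<Rightarrow> real"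
      unfolding KM using finM j0M by simp
    have s1: "l j0 + sum l M = 1" using l1 sK[of l] by simp
    have s1': "sum l M = 1 - l j0" using s1 by linarith
    have mu: "l j0 \<ge> 0" using l0 KM by auto
    have eqm: "\<forall>m\<in>M. l j0 * e m + l m * D = D / real n"
    proof
      fix m assume m: "m \<in> M"
      have "r^2 = l j0 * G m j0 + (\<Sum>k\<in>M. l k * G m k)"
        using l2 m KM sK[of "\<lambda>k. l k * G m k"] by auto
      also have "(\<Sum>k\<in>M. l k * G m k) = l m * G m m + c * (sum l M - l m)"
        using splitsum[OF finM m MJ] .
      also have "G m m = c + D" using GR m MJ Jsub unfolding c_def by auto
      also have "G m j0 = c + e m" unfolding e_def using Gsym by simp
      finally have "r^2 = l j0 * (c + e m) + l m * (c + D) + c * (sum l M - l m)" by simp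
      then have "r^2 = c + l j0 * e m + l m * D" using s1' by (simp add: algebra_simps)
      then show "l j0 * e m + l m * D = D / real n" using rr by simp
    qed
    have eqj: "l j0 * D + (\<Sum>m\<in>M. l m * e m) = D / real n"
    proof -
      have "r^2 = l j0 * G j0 j0 + (\<Sum>k\<in>M. l k * G j0 k)"
        using l2 KM sK[of "\<lambda>k. l k * G j0 k"] by auto
      also have "(\<Sum>k\<in>M. l k * G j0 k) = (\<Sum>k\<in>M. c * l k + l k * e k)"
        unfolding e_def by (intro sum.cong) (auto simp: algebra_simps)
      also have "\<dots> = c * sum l M + (\<Sum>k\<in>M. l k * e k)"
        by (simp add: sum.distrib sum_distrib_left)
      also have "G j0 j0 = c + D" using GR j0 unfolding c_def by auto
      finally have "r^2 = l j0 * (c + D) + c * sum l M + (\<Sum>k\<in>M. l k * e k)" by simp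
      then have "r^2 = c + l j0 * D + (\<Sum>k\<in>M. l k * e k)" using s1' by (simp add: algebra_simps)
      then show ?thesis using rr by simp
    qed
    have nn: "real n = real (card M) + 1" using cardM n2 by simp
    have fa: "D - sum e M > 0 \<and> (\<Sum>m\<in>M. (e m)^2) = 2*D * sum e M - (sum e M)^2"
      by (rule facet_alg[OF finM Dpos nn mu s1 eqm eqj])
    have "sum e M = sum e J - e i" unfolding M_def using finJ i by (simp add: sum_diff1)
    moreover have "(\<Sum>m\<in>M. (e m)^2) = (\<Sum>m\<in>J. (e m)^2) - (e i)^2"
      unfolding M_def using finJ i by (simp add: sum_diff1)
    ultimately show ?thesis using fa by simp
  qed
  have e0: "\<forall>i\<in>J. e i = 0"
    using final_alg[OF finJ _ Dpos] facet_i cardJ n2 by auto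
  have all: "dist (A k) (A l) = d0" if "k \<in> {0..n}" "l \<in> {0..n}" "k \<noteq> l" for k l
  proof -
    have j0i: "dist (A j0) (A i) = d0" if "i \<in> J" for i
    proof -
      have "(dist (A j0) (A i))^2 = 2 * R^2 - 2 * G j0 i" using distG j0 that Jsub by auto
      also have "\<dots> = d0^2" using e0 that unfolding e_def c_def D_def by auto
      finally show ?thesis using d0pos by (simp add: power2_eq_iff_nonneg)
    qed
    show ?thesis
    proof (cases "k = j0")
      case True then show ?thesis using j0i[of l] that unfolding J_def by auto
    next
      case False
      show ?thesis
      proof (cases "l = j0")
        case True then show ?thesis using j0i[of k] that False unfolding J_def
          by (auto simp: dist_commute)
      next
        case False2: False
        then show ?thesis using edge[of k l] that False unfolding J_def by auto
      qed
    qed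
  qed
  show ?thesis
    unfolding regular_simplex_def equal_edges_def using simp all by auto
qed

end
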